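(* Consider the WBDF4 coefficients $(a_0,\dots,a_3)=\big(\tfrac{22\alpha+3}{12},\tfrac{13-36\alpha}{12},\tfrac{18\alpha-5}{12},\tfrac{1-4\alpha}{12}\big)$, $(b_0,\dots,b_4)=(\alpha,1-\alpha,0,0,0)$, $(c_0,\dots,c_3)=(3\alpha+1,-6\alpha,4\alpha,-\alpha)$. For $\alpha\ge1$, $$\sigma_{\mathrm{F}}\ge1,\quad\sigma_{\mathrm{E}}\ge\frac{3(14\alpha+1)}{4(5\alpha-1)},\quad\lambda_{\mathrm{I}}\le\frac{3(2\alpha-1)}{4(5\alpha-1)},\quad\mathfrak{I}_{\mathrm{IE}}\le\frac{2\alpha-1}{14\alpha+1};$$ and for $\alpha\ge6/5$ all four relations hold with equality.
   Context: For coefficient vectors $(a_j)_{j=0}^{\mathrm{k}-1}$, $(b_j)_{j=0}^{\mathrm{k}}$, $(c_j)_{j=0}^{\mathrm{k}-1}$ define $a(\theta)=\sum_j a_je^{\imath j\theta}$, $b(\theta)=\sum_j b_je^{\imath j\theta}$, $c(\theta)=\sum_jc_je^{\imath j\theta}$ and $\sigma_{\mathrm{F}}=\max_{\theta\in[0,2\pi)}|1/a(\theta)|$, $\sigma_{\mathrm{E}}=\max_{\theta\in[0,2\pi)}|c(\theta)/a(\theta)|$, $\lambda_{\mathrm{I}}=\min_{\theta\in[0,2\pi)}\Re[b(\theta)/a(\theta)]$, $\mathfrak{I}_{\mathrm{IE}}=\lambda_{\mathrm{I}}/\sigma_{\mathrm{E}}$. Here $\mathrm{k}=4$. *)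

theory Defs
  imports "HOL-Analysis.Analysis"
begin

definition trig_poly :: "nat \<Rightarrow> (nat \<Rightarrow> real) \<Rightarrow> real \<Rightarrow> complex" where
  "trig_poly n coef \<theta> = (\<Sum>j<n. complex_of_real (coef j) * exp (\<i> * of_nat j * complex_of_real \<theta>))"

definition kk :: nat where "kk = 4"

definition a_fun :: "(nat \<Rightarrow> real) \<Rightarrow> real \<Rightarrow> complex" where
  "a_fun a = trig_poly kk a"
definition b_fun :: "(nat \<Rightarrow> real) \<Rightarrow> real \<Rightarrow> complex" where
  "b_fun b = trig_poly (kk + 1) b"
definition c_fun :: "(nat \<Rightarrow> real) \<Rightarrow> real \<Rightarrow> complex" where
  "c_fun c = trig_poly kk c"

definition sigma_F :: "(nat \<Rightarrow> real) \<Rightarrow> real" where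
  "sigma_F a = (SUP \<theta>\<in>{0..<2*pi}. norm (1 / a_fun a \<theta>))"

definition sigma_E :: "(nat \<Rightarrow> real) \<Rightarrow> (nat \<Rightarrow> real) \<Rightarrow> real" where
  "sigma_E a c = (SUP \<theta>\<in>{0..<2*pi}. norm (c_fun c \<theta> / a_fun a \<theta>))"

definition lambda_I :: "(nat \<Rightarrow> real) \<Rightarrow> (nat \<Rightarrow> real) \<Rightarrow> real" where
  "lambda_I a b = (INF \<theta>\<in>{0..<2*pi}. Re (b_fun b \<theta> / a_fun a \<theta>))"

definition I_IE :: "(nat \<Rightarrow> real) \<Rightarrow> (nat \<Rightarrow> real) \<Rightarrow> (nat \<Rightarrow> real) \<Rightarrow> real" where
  "I_IE a b c = lambda_I a b / sigma_E a c"

text \<open>WBDF4 coefficients (entries beyond the stated indices are irrelevant; set to 0).\<close>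
definition wbdf4_a :: "real \<Rightarrow> nat \<Rightarrow> real" where
  "wbdf4_a \<alpha> j = (if j = 0 then (22*\<alpha>+3)/12 else if j = 1 then (13-36*\<alpha>)/12
     else if j = 2 then (18*\<alpha>-5)/12 else if j = 3 then (1-4*\<alpha>)/12 else 0)"
definition wbdf4_b :: "real \<Rightarrow> nat \<Rightarrow> real" where
  "wbdf4_b \<alpha> j = (if j = 0 then \<alpha> else if j = 1 then 1-\<alpha> else 0)"
definition wbdf4_c :: "real \<Rightarrow> nat \<Rightarrow> real" where
  "wbdf4_c \<alpha> j = (if j = 0 then 3*\<alpha>+1 else if j = 1 then -6*\<alpha>
     else if j = 2 then 4*\<alpha> else if j = 3 then -\<alpha> else 0)"

end

theory Submission
  imports Defs
begin
definition RA :: "real \<Rightarrow> real \<Rightarrow> real" where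
 "RA a x = (22*a+3)/12 + (13-36*a)/12 * x + (18*a-5)/12*(2*x^2-1) + (1-4*a)/12*(4*x^3-3*x)"
definition IA :: "real \<Rightarrow> real \<Rightarrow> real" where
 "IA a x = (13-36*a)/12 + 2*(18*a-5)/12*x + (1-4*a)/12*(4*x^2-1)"
definition RC :: "real \<Rightarrow> real \<Rightarrow> real" where
 "RC a x = (3*a+1) - 6*a*x + 4*a*(2*x^2-1) - a*(4*x^3-3*x)"
definition IC :: "real \<Rightarrow> real \<Rightarrow> real" where
 "IC a x = -6*a + 8*a*x - a*(4*x^2-1)"

lemma P1:
  assumes t: "0 \<le> t" and x: "-1 \<le> x" "x \<le> 1"
  shows "1 \<le> RA (1+t) x ^2 + (1-x^2) * IA (1+t) x ^2"
proof -
  define u where "u = 1 - x"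
  define v where "v = 1 + x"
  define E where "E = 3*(v-25/3*u)^2+116/3*u^2+18*((320/9*t+200/9*t^2)*u^2+2*(t/3+7/3*t^2)*u* v+(2*t+2*t^2)* v^2)"
  have eq: "RA (1+t) x ^2 + (1-x^2) * IA (1+t) x ^2 - 1 = u * E / 72"
    unfolding E_def u_def v_def RA_def IA_def by algebra
  have "0 \<le> E" unfolding E_def using t x u_def v_def
    by (intro add_nonneg_nonneg mult_nonneg_nonneg) auto
  moreover have "0 \<le> u" using x u_def by simp
  ultimately show ?thesis using eq by (smt (verit) divide_nonneg_pos mult_nonneg_nonneg)
qed

lemma P2:
  assumes t: "0 \<le> t" and x: "-1 \<le> x" "x \<le> 1"
  shows "3*(2*(6/5+t)-1) * (RA (6/5+t) x ^2 + (1-x^2) * IA (6/5+t) x ^2)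
     \<le> 4*(5*(6/5+t)-1) * (((6/5+t) + (1-(6/5+t))*x) * RA (6/5+t) x + (1-x^2)*(1-(6/5+t)) * IA (6/5+t) x)"
proof -
  define u where "u = 1 - x"
  define v where "v = 1 + x"
  define B0 where "B0 = 1517/750+1161/25*t+426/5*t^2+116/3*t^3"
  define B1 where "B1 = 10219/750+2536/75*t+177/5*t^2+14*t^3"
  define B2 where "B2 = 79/10+7*t"
  have eq: "4*(5*(6/5+t)-1) * (((6/5+t) + (1-(6/5+t))*x) * RA (6/5+t) x + (1-x^2)*(1-(6/5+t)) * IA (6/5+t) x)
     - 3*(2*(6/5+t)-1) * (RA (6/5+t) x ^2 + (1-x^2) * IA (6/5+t) x ^2) = v * (B0*u^2 + 2*B1*u* v + B2* v^2) / 4"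
    unfolding B0_def B1_def B2_def u_def v_def RA_def IA_def by algebra
  have "0 \<le> B0*u^2 + 2*B1*u* v + B2* v^2" unfolding B0_def B1_def B2_def using t x u_def v_def
    by (intro add_nonneg_nonneg mult_nonneg_nonneg) auto
  moreover have "0 \<le> v" using x v_def by simp
  ultimately show ?thesis using eq by (smt (verit) divide_nonneg_pos mult_nonneg_nonneg)
qed

lemma P3:
  assumes t: "0 \<le> t" and x: "-1 \<le> x" "x \<le> 1"
  shows "16*(5*(6/5+t)-1)^2 * (RC (6/5+t) x ^2 + (1-x^2) * IC (6/5+t) x ^2)
     \<le> 9*(14*(6/5+t)+1)^2 * (RA (6/5+t) x ^2 + (1-x^2) * IA (6/5+t) x ^2)"
proof -
  define u where "u = 1 - x"
  define v where "v = 1 + x"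
  define B0 where "B0 = 4956049/1250+2559968/125*t+909932/25*t^2+131808/5*t^3+6632*t^4"
  define B1 where "B1 = 3330843/1250+931841/125*t+227719/25*t^2+27976/5*t^3+1364*t^4"
  define B2 where "B2 = 61289/50+9214/5*t+682*t^2"
  have eq: "9*(14*(6/5+t)+1)^2 * (RA (6/5+t) x ^2 + (1-x^2) * IA (6/5+t) x ^2)
     - 16*(5*(6/5+t)-1)^2 * (RC (6/5+t) x ^2 + (1-x^2) * IC (6/5+t) x ^2) = v * (B0*u^2 + 2*B1*u* v + B2* v^2) / 4"
    unfolding B0_def B1_def B2_def u_def v_def RA_def IA_def RC_def IC_def by algebra
  have "0 \<le> B0*u^2 + 2*B1*u* v + B2* v^2" unfolding B0_def B1_def B2_def using t x u_def v_def
    by (intro add_nonneg_nonneg mult_nonneg_nonneg) auto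
  moreover have "0 \<le> v" using x v_def by simp
  ultimately show ?thesis using eq by (smt (verit) divide_nonneg_pos mult_nonneg_nonneg)
qed

lemma trig4:
  "trig_poly 4 f \<theta> = of_real (f 0) + of_real (f 1) * cis \<theta> + of_real (f 2) * cis \<theta> ^ 2 + of_real (f 3) * cis \<theta> ^ 3"
proof -
  have e: "exp (\<i> * of_nat j * complex_of_real \<theta>) = cis \<theta> ^ j" for j
  proof -
    have "exp (\<i> * of_nat j * complex_of_real \<theta>) = cis (of_nat j * \<theta>)"
      unfolding cis_conv_exp by (simp add: algebra_simps)
    then show ?thesis using Complex.DeMoivre[of \<theta> j] by simp
  qed
  show ?thesis unfolding trig_poly_def e by (simp add: eval_nat_numeral)
qed

lemma compA:
  "Re (a_fun (wbdf4_a a) \<theta>) = RA a (cos \<theta>) \<and> Im (a_fun (wbdf4_a a) \<theta>) = sin \<theta> * IA a (cos \<theta>)"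
proof -
  have s: "sin \<theta> ^ 2 = 1 - cos \<theta> ^ 2" by (simp add: sin_squared_eq)
  have 1: "Re (a_fun (wbdf4_a a) \<theta>) = RA a (cos \<theta>)" unfolding a_fun_def kk_def trig4
    apply (simp add: wbdf4_a_def RA_def power2_eq_square power3_eq_cube)
    using s by algebra
  have 2: "Im (a_fun (wbdf4_a a) \<theta>) = sin \<theta> * IA a (cos \<theta>)" unfolding a_fun_def kk_def trig4
    apply (simp add: wbdf4_a_def IA_def power2_eq_square power3_eq_cube)
    using s by algebra
  show ?thesis using 1 2 by simp
qed

lemma compC:
  "Re (c_fun (wbdf4_c a) \<theta>) = RC a (cos \<theta>) \<and> Im (c_fun (wbdf4_c a) \<theta>) = sin \<theta> * IC a (cos \<theta>)"
proof -
  have s: "sin \<theta> ^ 2 = 1 - cos \<theta> ^ 2" by (simp add: sin_squared_eq)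
  have 1: "Re (c_fun (wbdf4_c a) \<theta>) = RC a (cos \<theta>)" unfolding c_fun_def kk_def trig4
    apply (simp add: wbdf4_c_def RC_def power2_eq_square power3_eq_cube)
    using s by algebra
  have 2: "Im (c_fun (wbdf4_c a) \<theta>) = sin \<theta> * IC a (cos \<theta>)" unfolding c_fun_def kk_def trig4
    apply (simp add: wbdf4_c_def IC_def power2_eq_square power3_eq_cube)
    using s by algebra
  show ?thesis using 1 2 by simp
qed

lemma compB:
  "Re (b_fun (wbdf4_b a) \<theta>) = a + (1-a) * cos \<theta> \<and> Im (b_fun (wbdf4_b a) \<theta>) = sin \<theta> * (1-a)"
  unfolding b_fun_def kk_def trig_poly_def
  by (simp add: wbdf4_b_def eval_nat_numeral Re_exp Im_exp)


lemma trig_bound: "cmod (trig_poly n f \<theta>) \<le> (\<Sum>j<n. \<bar>f j\<bar>)"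
proof -
  have "cmod (trig_poly n f \<theta>) \<le> (\<Sum>j<n. cmod (complex_of_real (f j) * exp (\<i> * of_nat j * complex_of_real \<theta>)))"
    unfolding trig_poly_def by (rule norm_sum)
  also have "\<dots> = (\<Sum>j<n. \<bar>f j\<bar>)"
    by (intro sum.cong refl) (simp add: norm_mult norm_exp_eq_Re)
  finally show ?thesis .
qed

lemma NA_eq: "cmod (a_fun (wbdf4_a al) \<theta>)^2 = RA al (cos \<theta>)^2 + (1 - cos \<theta>^2) * IA al (cos \<theta>)^2"
  using compA[of al \<theta>] by (simp add: cmod_power2 power_mult_distrib sin_squared_eq)

lemma NC_eq: "cmod (c_fun (wbdf4_c al) \<theta>)^2 = RC al (cos \<theta>)^2 + (1 - cos \<theta>^2) * IC al (cos \<theta>)^2"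
  using compC[of al \<theta>] by (simp add: cmod_power2 power_mult_distrib sin_squared_eq)

lemma BA_eq: "Re (b_fun (wbdf4_b al) \<theta> / a_fun (wbdf4_a al) \<theta>) =
   ((al + (1-al)*cos \<theta>) * RA al (cos \<theta>) + (1 - cos \<theta>^2)*(1-al)*IA al (cos \<theta>)) / cmod (a_fun (wbdf4_a al) \<theta>)^2"
proof -
  have e: "sin \<theta> * (1-al) * (sin \<theta> * IA al (cos \<theta>)) = (1 - cos \<theta>^2)*(1-al)*IA al (cos \<theta>)"
    using sin_squared_eq[of \<theta>] by algebra
  show ?thesis unfolding Re_divide cmod_power2[symmetric] using compA[of al \<theta>] compB[of al \<theta>] e by simp
qed

lemma A_ge1: assumes "1 \<le> al" shows "1 \<le> cmod (a_fun (wbdf4_a al) \<theta>)"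
proof -
  have "1 \<le> cmod (a_fun (wbdf4_a al) \<theta>)^2" using NA_eq[of al \<theta>] P1[of "al-1" "cos \<theta>"] assms by simp
  then show ?thesis using power2_le_imp_le[of 1 "cmod (a_fun (wbdf4_a al) \<theta>)"] by simp
qed

lemma A0: "a_fun (wbdf4_a al) 0 = 1"
  using compA[of al 0] by (simp add: complex_eq_iff RA_def field_simps)

lemma Api: "a_fun (wbdf4_a al) pi = complex_of_real (4*(5*al-1)/3)"
  using compA[of al pi] by (simp add: complex_eq_iff RA_def field_simps)

lemma Cpi: "c_fun (wbdf4_c al) pi = complex_of_real (14*al+1)"
  using compC[of al pi] by (simp add: complex_eq_iff RC_def)

lemma Bpi: "b_fun (wbdf4_b al) pi = complex_of_real (2*al-1)"
  using compB[of al pi] by (simp add: complex_eq_iff)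


lemma P2':
  assumes "6/5 \<le> al"
  shows "3*(2*al-1) * cmod (a_fun (wbdf4_a al) \<theta>)^2 \<le>
    4*(5*al-1) * ((al + (1-al)*cos \<theta>) * RA al (cos \<theta>) + (1 - cos \<theta>^2)*(1-al)*IA al (cos \<theta>))"
  using P2[of "al - 6/5" "cos \<theta>"] assms NA_eq[of al \<theta>] by simp

lemma P3':
  assumes "6/5 \<le> al"
  shows "4*(5*al-1) * cmod (c_fun (wbdf4_c al) \<theta>) \<le> 3*(14*al+1) * cmod (a_fun (wbdf4_a al) \<theta>)"
proof -
  have "(4*(5*al-1) * cmod (c_fun (wbdf4_c al) \<theta>))^2 \<le> (3*(14*al+1) * cmod (a_fun (wbdf4_a al) \<theta>))^2"
  proof -
    have "4^2*(5*al-1)^2 * cmod (c_fun (wbdf4_c al) \<theta>)^2 \<le> 3^2*(14*al+1)^2 * cmod (a_fun (wbdf4_a al) \<theta>)^2"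
      using P3[of "al - 6/5" "cos \<theta>"] assms NA_eq[of al \<theta>] NC_eq[of al \<theta>] by simp
    moreover have "(4*(5*al-1) * cmod (c_fun (wbdf4_c al) \<theta>))^2 = 4^2*(5*al-1)^2 * cmod (c_fun (wbdf4_c al) \<theta>)^2"
      by (simp only: power_mult_distrib)
    moreover have "(3*(14*al+1) * cmod (a_fun (wbdf4_a al) \<theta>))^2 = 3^2*(14*al+1)^2 * cmod (a_fun (wbdf4_a al) \<theta>)^2"
      by (simp only: power_mult_distrib)
    ultimately show ?thesis by (simp only:)
  qed
  moreover have "0 \<le> 3*(14*al+1) * cmod (a_fun (wbdf4_a al) \<theta>)" using assms by simp
  ultimately show ?thesis by (rule power2_le_imp_le)
qed

theorem mainTheorem5:
  fixes \<alpha> :: real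
  shows "(\<alpha> \<ge> 1 \<longrightarrow>
            sigma_F (wbdf4_a \<alpha>) \<ge> 1 \<and>
            sigma_E (wbdf4_a \<alpha>) (wbdf4_c \<alpha>) \<ge> 3*(14*\<alpha>+1) / (4*(5*\<alpha>-1)) \<and>
            lambda_I (wbdf4_a \<alpha>) (wbdf4_b \<alpha>) \<le> 3*(2*\<alpha>-1) / (4*(5*\<alpha>-1)) \<and>
            I_IE (wbdf4_a \<alpha>) (wbdf4_b \<alpha>) (wbdf4_c \<alpha>) \<le> (2*\<alpha>-1) / (14*\<alpha>+1))
       \<and> (\<alpha> \<ge> 6/5 \<longrightarrow>
            sigma_F (wbdf4_a \<alpha>) = 1 \<and>
            sigma_E (wbdf4_a \<alpha>) (wbdf4_c \<alpha>) = 3*(14*\<alpha>+1) / (4*(5*\<alpha>-1)) \<and>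
            lambda_I (wbdf4_a \<alpha>) (wbdf4_b \<alpha>) = 3*(2*\<alpha>-1) / (4*(5*\<alpha>-1)) \<and>
            I_IE (wbdf4_a \<alpha>) (wbdf4_b \<alpha>) (wbdf4_c \<alpha>) = (2*\<alpha>-1) / (14*\<alpha>+1))"
proof -
  define A where "A = a_fun (wbdf4_a \<alpha>)"
  define B where "B = b_fun (wbdf4_b \<alpha>)"
  define C where "C = c_fun (wbdf4_c \<alpha>)"
  define D where "D = {0..<2*pi}"
  define S where "S = 3*(14*\<alpha>+1) / (4*(5*\<alpha>-1))"
  define L where "L = 3*(2*\<alpha>-1) / (4*(5*\<alpha>-1))"
  have D0: "0 \<in> D" and Dpi: "pi \<in> D" unfolding D_def using pi_gt_zero by auto
  have LS: "L / S = (2*\<alpha>-1) / (14*\<alpha>+1)" if "1 \<le> \<alpha>"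
  proof -
    have n1: "5*\<alpha>-1 \<noteq> 0" and n2: "14*\<alpha>+1 \<noteq> 0" using that by auto
    define X where "X = 4*(5*\<alpha>-1)"
    have nX: "X \<noteq> 0" unfolding X_def using n1 by simp
    have "L / S = (3*(2*\<alpha>-1) * X) / (X * (3*(14*\<alpha>+1)))"
      unfolding L_def S_def X_def[symmetric] by (rule divide_divide_times_eq)
    also have "\<dots> = (X * (3*(2*\<alpha>-1))) / (X * (3*(14*\<alpha>+1)))" by (simp only: mult.commute)
    also have "\<dots> = (3*(2*\<alpha>-1)) / (3*(14*\<alpha>+1))" using nX by (simp only: mult_divide_mult_cancel_left_if if_False)
    also have "\<dots> = (2*\<alpha>-1) / (14*\<alpha>+1)" by (simp only: mult_divide_mult_cancel_left_if) simp
    finally show ?thesis .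
  qed
  have Sval: "C pi / A pi = complex_of_real S" and Spos: "0 < S" if al: "1 \<le> \<alpha>"
  proof -
    have "C pi / A pi = complex_of_real ((14*\<alpha>+1) / (4*(5*\<alpha>-1)/3))"
      unfolding A_def C_def Api Cpi by simp
    also have "(14*\<alpha>+1) / (4*(5*\<alpha>-1)/3) = S" unfolding S_def by (simp add: divide_divide_eq_right mult.commute)
    finally show "C pi / A pi = complex_of_real S" .
    have "0 < 3*(14*\<alpha>+1)" "0 < 4*(5*\<alpha>-1)" using al by auto
    then show "0 < S" unfolding S_def by (rule divide_pos_pos)
  qed
  have Lval: "B pi / A pi = complex_of_real L"
  proof -
    have "B pi / A pi = complex_of_real ((2*\<alpha>-1) / (4*(5*\<alpha>-1)/3))"
      unfolding A_def B_def Api Bpi by simp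
    also have "(2*\<alpha>-1) / (4*(5*\<alpha>-1)/3) = L" unfolding L_def by (simp add: divide_divide_eq_right mult.commute)
    finally show ?thesis .
  qed
  have common: "sigma_F (wbdf4_a \<alpha>) = 1 \<and> S \<le> sigma_E (wbdf4_a \<alpha>) (wbdf4_c \<alpha>) \<and>
      lambda_I (wbdf4_a \<alpha>) (wbdf4_b \<alpha>) \<le> L \<and>
      I_IE (wbdf4_a \<alpha>) (wbdf4_b \<alpha>) (wbdf4_c \<alpha>) \<le> (2*\<alpha>-1) / (14*\<alpha>+1)" if al: "1 \<le> \<alpha>"
  proof -
    have ge1: "1 \<le> cmod (A \<theta>)" for \<theta> unfolding A_def using A_ge1 al by blast
    have divle: "cmod (P / A \<theta>) \<le> cmod P" for P \<theta>
    proof -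
      have "cmod P \<le> cmod P * cmod (A \<theta>)" using ge1[of \<theta>] norm_ge_zero[of P]
        by (simp add: mult_le_cancel_left1)
      moreover have "0 < cmod (A \<theta>)" using ge1[of \<theta>] by linarith
      ultimately show ?thesis by (simp add: norm_divide pos_divide_le_eq)
    qed
    have sF: "sigma_F (wbdf4_a \<alpha>) = 1" unfolding sigma_F_def A_def[symmetric] D_def[symmetric]
    proof (rule cSup_eq_maximum)
      show "1 \<in> (\<lambda>\<theta>. cmod (1 / A \<theta>)) ` D" using D0 A0[of \<alpha>] unfolding A_def by force
      show "x \<le> 1" if xin: "x \<in> (\<lambda>\<theta>. cmod (1 / A \<theta>)) ` D" for x
      proof -
        obtain \<theta> where x: "x = cmod (1 / A \<theta>)" using xin by blast
        show ?thesis unfolding x using divle[of 1 \<theta>] by simp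
      qed
    qed
    have bE: "bdd_above ((\<lambda>\<theta>. cmod (C \<theta> / A \<theta>)) ` D)"
    proof (rule bdd_aboveI2)
      fix \<theta>
      have "cmod (C \<theta> / A \<theta>) \<le> cmod (C \<theta>)" by (rule divle)
      also have "\<dots> \<le> (\<Sum>j<4. \<bar>wbdf4_c \<alpha> j\<bar>)" unfolding C_def c_fun_def kk_def by (rule trig_bound)
      finally show "cmod (C \<theta> / A \<theta>) \<le> (\<Sum>j<4. \<bar>wbdf4_c \<alpha> j\<bar>)" .
    qed
    have Epi: "cmod (C pi / A pi) = S" using Sval[OF al] Spos[OF al] by simp
    have sE: "S \<le> sigma_E (wbdf4_a \<alpha>) (wbdf4_c \<alpha>)" unfolding sigma_E_def A_def[symmetric] C_def[symmetric] D_def[symmetric]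
      using cSUP_upper[OF Dpi bE] Epi by simp
    have bI: "bdd_below ((\<lambda>\<theta>. Re (B \<theta> / A \<theta>)) ` D)"
    proof (rule bdd_belowI2)
      fix \<theta>
      have "cmod (B \<theta> / A \<theta>) \<le> cmod (B \<theta>)" by (rule divle)
      also have "\<dots> \<le> (\<Sum>j<kk+1. \<bar>wbdf4_b \<alpha> j\<bar>)" unfolding B_def b_fun_def by (rule trig_bound)
      finally have "cmod (B \<theta> / A \<theta>) \<le> (\<Sum>j<kk+1. \<bar>wbdf4_b \<alpha> j\<bar>)" .
      then show "- (\<Sum>j<kk+1. \<bar>wbdf4_b \<alpha> j\<bar>) \<le> Re (B \<theta> / A \<theta>)"
        using abs_Re_le_cmod[of "B \<theta> / A \<theta>"] by linarith
    qed
    have Ipi: "Re (B pi / A pi) = L" using Lval by simp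
    have lI: "lambda_I (wbdf4_a \<alpha>) (wbdf4_b \<alpha>) \<le> L" unfolding lambda_I_def A_def[symmetric] B_def[symmetric] D_def[symmetric]
      using cINF_lower[OF bI Dpi] Ipi by simp
    have Spos': "0 < S" by (rule Spos[OF al])
    have "I_IE (wbdf4_a \<alpha>) (wbdf4_b \<alpha>) (wbdf4_c \<alpha>) \<le> (2*\<alpha>-1) / (14*\<alpha>+1)"
    proof (cases "lambda_I (wbdf4_a \<alpha>) (wbdf4_b \<alpha>) \<le> 0")
      case True
      have "0 \<le> (2*\<alpha>-1) / (14*\<alpha>+1)" using al by simp
      moreover have "0 < sigma_E (wbdf4_a \<alpha>) (wbdf4_c \<alpha>)" using sE Spos' by linarith
      then have "I_IE (wbdf4_a \<alpha>) (wbdf4_b \<alpha>) (wbdf4_c \<alpha>) \<le> 0" unfolding I_IE_def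
        using True by (simp add: divide_nonpos_pos)
      ultimately show ?thesis by linarith
    next
      case False
      then have "I_IE (wbdf4_a \<alpha>) (wbdf4_b \<alpha>) (wbdf4_c \<alpha>) \<le> L / S" unfolding I_IE_def
        using sE Spos' lI by (intro frac_le) auto
      then show ?thesis using LS[OF al] by simp
    qed
    then show ?thesis using sF sE lI by simp
  qed
  have part2: "sigma_E (wbdf4_a \<alpha>) (wbdf4_c \<alpha>) = S \<and> lambda_I (wbdf4_a \<alpha>) (wbdf4_b \<alpha>) = L" if al: "6/5 \<le> \<alpha>"
  proof
    have al1: "1 \<le> \<alpha>" using al by simp
    have ge1: "1 \<le> cmod (A \<theta>)" for \<theta> unfolding A_def using A_ge1 al1 by blast
    have Epi: "cmod (C pi / A pi) = S" using Sval[OF al1] Spos[OF al1] by simp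
    have X: "0 < 4*(5*\<alpha>-1)" using al by simp
    show "sigma_E (wbdf4_a \<alpha>) (wbdf4_c \<alpha>) = S" unfolding sigma_E_def A_def[symmetric] C_def[symmetric] D_def[symmetric]
    proof (rule cSup_eq_maximum)
      show "S \<in> (\<lambda>\<theta>. cmod (C \<theta> / A \<theta>)) ` D" using Dpi Epi by force
      fix x assume "x \<in> (\<lambda>\<theta>. cmod (C \<theta> / A \<theta>)) ` D"
      then obtain \<theta> where x: "x = cmod (C \<theta> / A \<theta>)" by blast
      have p: "0 < cmod (A \<theta>)" using ge1[of \<theta>] by linarith
      have h: "4*(5*\<alpha>-1) * cmod (C \<theta>) \<le> 3*(14*\<alpha>+1) * cmod (A \<theta>)" unfolding A_def C_def using P3'[OF al] .
      have "cmod (C \<theta>) \<le> S * cmod (A \<theta>)" unfolding S_def using X h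
        by (simp add: pos_le_divide_eq mult.commute mult.left_commute)
      then show "x \<le> S" unfolding x norm_divide using p by (simp add: pos_divide_le_eq)
    qed
    show "lambda_I (wbdf4_a \<alpha>) (wbdf4_b \<alpha>) = L" unfolding lambda_I_def A_def[symmetric] B_def[symmetric] D_def[symmetric]
    proof (rule cInf_eq_minimum)
      show "L \<in> (\<lambda>\<theta>. Re (B \<theta> / A \<theta>)) ` D" using Dpi Lval by force
      fix x assume "x \<in> (\<lambda>\<theta>. Re (B \<theta> / A \<theta>)) ` D"
      then obtain \<theta> where x: "x = Re (B \<theta> / A \<theta>)" by blast
      define N where "N = cmod (A \<theta>)^2"
      define BA where "BA = (\<alpha> + (1-\<alpha>)*cos \<theta>) * RA \<alpha> (cos \<theta>) + (1 - cos \<theta>^2)*(1-\<alpha>)*IA \<alpha> (cos \<theta>)"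
      have "0 < cmod (A \<theta>)" using ge1[of \<theta>] by linarith
      then have p: "0 < N" unfolding N_def by (rule zero_less_power)
      have xe: "x = BA / N" unfolding x N_def BA_def A_def B_def by (rule BA_eq)
      have h: "3*(2*\<alpha>-1) * N \<le> 4*(5*\<alpha>-1) * BA"
        unfolding N_def BA_def A_def using P2'[OF al] .
      have "L * N \<le> BA" unfolding L_def using X h
        by (simp add: pos_divide_le_eq mult.commute mult.left_commute)
      then show "L \<le> x" unfolding xe using p by (simp add: pos_le_divide_eq)
    qed
  qed
  show ?thesis
  proof (intro conjI impI)
    assume "1 \<le> \<alpha>" then show "1 \<le> sigma_F (wbdf4_a \<alpha>)" using common by simp
  next
    assume "1 \<le> \<alpha>" then show "3*(14*\<alpha>+1) / (4*(5*\<alpha>-1)) \<le> sigma_E (wbdf4_a \<alpha>) (wbdf4_c \<alpha>)"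
      using common unfolding S_def by blast
  next
    assume "1 \<le> \<alpha>" then show "lambda_I (wbdf4_a \<alpha>) (wbdf4_b \<alpha>) \<le> 3*(2*\<alpha>-1) / (4*(5*\<alpha>-1))"
      using common unfolding L_def by blast
  next
    assume "1 \<le> \<alpha>" then show "I_IE (wbdf4_a \<alpha>) (wbdf4_b \<alpha>) (wbdf4_c \<alpha>) \<le> (2*\<alpha>-1) / (14*\<alpha>+1)" using common by blast
  next
    assume "6/5 \<le> \<alpha>" then show "sigma_F (wbdf4_a \<alpha>) = 1" using common by simp
  next
    assume "6/5 \<le> \<alpha>" then show "sigma_E (wbdf4_a \<alpha>) (wbdf4_c \<alpha>) = 3*(14*\<alpha>+1) / (4*(5*\<alpha>-1))"
      using part2 unfolding S_def by blast
  next
    assume "6/5 \<le> \<alpha>" then show "lambda_I (wbdf4_a \<alpha>) (wbdf4_b \<alpha>) = 3*(2*\<alpha>-1) / (4*(5*\<alpha>-1))"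
      using part2 unfolding L_def by blast
  next
    assume a: "6/5 \<le> \<alpha>"
    then have "1 \<le> \<alpha>" by simp
    then show "I_IE (wbdf4_a \<alpha>) (wbdf4_b \<alpha>) (wbdf4_c \<alpha>) = (2*\<alpha>-1) / (14*\<alpha>+1)"
      using part2[OF a] LS unfolding I_IE_def by simp
  qed
qed

end
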